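(* Let $(T,\mathsf{T})$ be a measurable space, $(X,d)$ a complete separable metric space, and let $f:T\to X$ and $\rho:T\to[0,\infty)$ be measurable. Let $\phi:X\times X\to[0,\infty)$ be a Carath\'eodory distance. Then the set-valued map $t\mapsto\overline{B}^\phi_{\rho(t)}(f(t))$ is graph measurable.
   Context: A Carath\'eodory distance is a function $\phi:X\times X\to[0,\infty)$ continuous in its left argument and Borel measurable in its right argument. $\overline{B}^\phi_r(x):=\{y\in X\mid\phi(y,x)\le r\}$. A set-valued map $\varphi:T\to2^X$ is graph measurable if $\{(t,x)\mid x\in\varphi(t)\}\in\mathsf{T}\otimes\mathsf{B}(X)$. *)

theory Defs
  imports "HOL-Analysis.Analysis"
begin

definition caratheodory_distance :: "('x::metric_space \<Rightarrow> 'x \<Rightarrow> real) \<Rightarrow> bool" where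
  "caratheodory_distance \<phi> \<longleftrightarrow>
     (\<forall>x y. 0 \<le> \<phi> x y) \<and>
     (\<forall>y. continuous_on UNIV (\<lambda>x. \<phi> x y)) \<and>
     (\<forall>x. (\<lambda>y. \<phi> x y) \<in> borel_measurable borel)"

definition phi_cball :: "('x \<Rightarrow> 'x \<Rightarrow> real) \<Rightarrow> 'x \<Rightarrow> real \<Rightarrow> 'x set" where
  "phi_cball \<phi> x r = {y. \<phi> y x \<le> r}"

definition graph_measurable :: "'t measure \<Rightarrow> ('t \<Rightarrow> 'x::topological_space set) \<Rightarrow> bool" where
  "graph_measurable M F \<longleftrightarrow> {(t, x). t \<in> space M \<and> x \<in> F t} \<in> sets (M \<Otimes>\<^sub>M borel)"

end

theory Submission
  imports Defs
begin

theorem lemma2p9: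
  fixes M :: "'t measure"
    and f :: "'t \<Rightarrow> 'x::polish_space"
    and \<rho> :: "'t \<Rightarrow> real"
    and \<phi> :: "'x \<Rightarrow> 'x \<Rightarrow> real"
  assumes "f \<in> M \<rightarrow>\<^sub>M borel"
    and "\<rho> \<in> borel_measurable M"
    and "\<forall>t\<in>space M. 0 \<le> \<rho> t"
    and "caratheodory_distance \<phi>"
  shows "graph_measurable M (\<lambda>t. phi_cball \<phi> (f t) (\<rho> t))"
proof -
  note fm[measurable] = assms(1)
  note rm[measurable] = assms(2)
  have cont: "\<And>y. continuous_on UNIV (\<lambda>x. \<phi> x y)"
    and pm: "\<And>x. (\<lambda>y. \<phi> x y) \<in> borel_measurable borel"
    using assms(4) unfolding caratheodory_distance_def by auto
  obtain D :: "'x set" where D: "countable D" "\<And>U. open U \<Longrightarrow> U \<noteq> {} \<Longrightarrow> \<exists>d\<in>D. d \<in> U"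
    using countable_dense_exists by blast
  have "D \<noteq> {}" using D(2)[of UNIV] by auto
  define ds where "ds = from_nat_into D"
  have ex: "\<exists>k. dist (ds k) y < e" if "e > 0" for y e
  proof -
    obtain d where "d \<in> D" "d \<in> ball y e" using D(2)[of "ball y e"] \<open>e>0\<close> by auto
    then obtain k where "ds k = d" unfolding ds_def using from_nat_into_surj[OF D(1)] by metis
    then show ?thesis using \<open>d \<in> ball y e\<close> by (auto simp: dist_commute)
  qed
  define kn where "kn n y = (LEAST k. dist (ds k) y < 1 / (Suc n))" for n y
  have kn_prop: "dist (ds (kn n y)) y < 1 / Suc n" for n y
    unfolding kn_def by (rule LeastI_ex) (rule ex, simp)
  have knm: "(\<lambda>w. kn n (snd w)) \<in> (M \<Otimes>\<^sub>M borel) \<rightarrow>\<^sub>M count_space UNIV" for n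
  proof -
    have "(\<lambda>y. kn n y) \<in> (borel :: 'x measure) \<rightarrow>\<^sub>M count_space UNIV"
      unfolding kn_def by measurable
    then show ?thesis by measurable
  qed
  define h where "h n w = \<phi> (ds (kn n (snd w))) (f (fst w))" for n w
  have hm: "h n \<in> borel_measurable (M \<Otimes>\<^sub>M borel)" for n
  proof -
    have "(\<lambda>w. \<phi> (ds i) (f (fst w))) \<in> borel_measurable (M \<Otimes>\<^sub>M borel)" for i
      by (rule measurable_compose[OF measurable_compose[OF measurable_fst fm] pm[of "ds i"]])
    then show ?thesis unfolding h_def
      by (rule measurable_compose_countable[where f="\<lambda>i w. \<phi> (ds i) (f (fst w))", OF _ knm])
  qed
  have lim: "(\<lambda>n. h n w) \<longlonglongrightarrow> \<phi> (snd w) (f (fst w))" for w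
  proof -
    have "(\<lambda>n. ds (kn n (snd w))) \<longlonglongrightarrow> snd w"
    proof (rule tendsto_dist_iff[THEN iffD2])
      have "(\<lambda>n. 1 / real (Suc n)) \<longlonglongrightarrow> 0" by (rule LIMSEQ_inverse_real_of_nat[unfolded inverse_eq_divide])
      
      moreover have "\<forall>\<^sub>F n in sequentially. norm (dist (ds (kn n (snd w))) (snd w)) \<le> 1 / real (Suc n)"
        using kn_prop by (intro always_eventually allI) (auto intro: less_imp_le)
      ultimately show "(\<lambda>n. dist (ds (kn n (snd w))) (snd w)) \<longlonglongrightarrow> 0"
        by (rule Lim_null_comparison[rotated])
    qed
    moreover have "isCont (\<lambda>x. \<phi> x (f (fst w))) (snd w)"
      using cont continuous_on_eq_continuous_at by blast
    ultimately show ?thesis unfolding h_def by (rule isCont_tendsto_compose[rotated])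
  qed
  have gm[measurable]: "(\<lambda>w. \<phi> (snd w) (f (fst w))) \<in> borel_measurable (M \<Otimes>\<^sub>M borel)"
    by (rule borel_measurable_LIMSEQ_real[OF lim hm])
  have "{(t, x). t \<in> space M \<and> x \<in> phi_cball \<phi> (f t) (\<rho> t)}
      = {w \<in> space (M \<Otimes>\<^sub>M borel). \<phi> (snd w) (f (fst w)) \<le> \<rho> (fst w)}"
    by (auto simp: phi_cball_def space_pair_measure)
  also have "\<dots> \<in> sets (M \<Otimes>\<^sub>M borel)" by measurable
  finally show ?thesis unfolding graph_measurable_def .
qed

end
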